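(* Let $R$ be a finite chain ring, $r\ge1$, and let $A=\bigcup_{i=1}^lA_i\subseteq R$ be a well-conditioned set partitioned into $l$ blocks with $|A_i|=r+1$, so $n=|A|=(r+1)l$. Assume there is $g\in\mathcal F_A$ of degree $r+1$ such that $1,g,\dots,g^{l-1}$ span $\mathcal F_A$ as an $R$-module. Let $\mathcal F_A^r=\bigoplus_{i=0}^{r-1}\mathcal F_A\,x^i$, let $K=rt$ with $1\le t\le l$, and let $\Phi:R^K\to\mathcal F_A^r$, $a\mapsto f_a$, be an injective $R$-linear map. Let $\mathcal C=\{(f_a(\alpha))_{\alpha\in A}: a\in R^K\}$. Then $\mathcal C$ is a free $R$-linear code of length $n$ and rank $K$, each coordinate $\alpha\in A_j$ can be recovered from the coordinates in $A_j\setminus\{\alpha\}$ (so $\mathcal C$ has locality $r$), and its minimum distance satisfies $$d\ \ge\ n-\max_{a\in R^K\setminus\{0\}}\deg f_a .$$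
   Context: A finite chain ring is a finite commutative local ring whose ideals are totally ordered by inclusion; $N(R)$ is its unit group. A subset $T\subseteq N(R)$ is subtractive if $a-b\in N(R)$ for all distinct $a,b\in T$. A set $\{a_1,\dots,a_n\}\subseteq R$ is well-conditioned if either it is a subtractive subset of $N(R)$, or for some $i$ the set without $a_i$ is a subtractive subset of $N(R)$ and $a_i$ is a zero divisor (or $0$). For a partition $A=\bigcup_i A_i$, $\mathcal F_A=\{f\in R[x]:\deg f<|A|,\ f$ constant on each $A_i\}$. *)

theory Defs
  imports "HOL-Computational_Algebra.Polynomial"
begin

definition is_ideal :: "'a::comm_ring_1 set \<Rightarrow> bool" where
  "is_ideal I \<longleftrightarrow> 0 \<in> I \<and> (\<forall>x\<in>I. \<forall>y\<in>I. x + y \<in> I) \<and> (\<forall>r. \<forall>x\<in>I. r * x \<in> I)"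

definition units_of_ring :: "'a::comm_ring_1 set" where
  "units_of_ring = {a. a dvd 1}"

definition local_ring :: "'a::comm_ring_1 itself \<Rightarrow> bool" where
  "local_ring _ \<longleftrightarrow> (0::'a) \<noteq> 1 \<and> is_ideal (- (units_of_ring :: 'a set))"

definition finite_chain_ring :: "'a::comm_ring_1 itself \<Rightarrow> bool" where
  "finite_chain_ring T \<longleftrightarrow> finite (UNIV :: 'a set) \<and> local_ring T \<and>
     (\<forall>I J :: 'a set. is_ideal I \<and> is_ideal J \<longrightarrow> I \<subseteq> J \<or> J \<subseteq> I)"

definition subtractive :: "'a::comm_ring_1 set \<Rightarrow> bool" where
  "subtractive T \<longleftrightarrow> T \<subseteq> units_of_ring \<and>
     (\<forall>a\<in>T. \<forall>b\<in>T. a \<noteq> b \<longrightarrow> a - b \<in> units_of_ring)"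

text \<open>Zero divisor (including 0): annihilated by some nonzero element.\<close>
definition zero_divisor :: "'a::comm_ring_1 \<Rightarrow> bool" where
  "zero_divisor a \<longleftrightarrow> (\<exists>b. b \<noteq> 0 \<and> a * b = 0)"

definition well_conditioned :: "'a::comm_ring_1 set \<Rightarrow> bool" where
  "well_conditioned S \<longleftrightarrow> subtractive S \<or>
     (\<exists>a\<in>S. subtractive (S - {a}) \<and> (zero_divisor a \<or> a = 0))"

definition F_A :: "'a::comm_ring_1 set \<Rightarrow> (nat \<Rightarrow> 'a set) \<Rightarrow> nat \<Rightarrow> 'a poly set" where
  "F_A A Ablk l = {f. degree f < card A \<and>
      (\<forall>i<l. \<forall>x\<in>Ablk i. \<forall>y\<in>Ablk i. poly f x = poly f y)}"

definition F_A_r :: "'a::comm_ring_1 set \<Rightarrow> (nat \<Rightarrow> 'a set) \<Rightarrow> nat \<Rightarrow> nat \<Rightarrow> 'a poly set" where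
  "F_A_r A Ablk l r = {(\<Sum>i<r. h i * monom 1 i) | h. \<forall>i<r. h i \<in> F_A A Ablk l}"

text \<open>R^K, modelled as functions nat => R supported in {..<K}.\<close>
definition vecs :: "nat \<Rightarrow> (nat \<Rightarrow> 'a::zero) set" where
  "vecs K = {a. \<forall>i\<ge>K. a i = 0}"

text \<open>Codewords are functions on A (0 outside A).\<close>
definition eval_code :: "'a::comm_ring_1 set \<Rightarrow> nat \<Rightarrow> ((nat \<Rightarrow> 'a) \<Rightarrow> 'a poly) \<Rightarrow> ('a \<Rightarrow> 'a) set" where
  "eval_code A K \<Phi> = {(\<lambda>\<alpha>. if \<alpha> \<in> A then poly (\<Phi> a) \<alpha> else 0) | a. a \<in> vecs K}"

definition free_code_of_rank :: "'a::comm_ring_1 set \<Rightarrow> ('a \<Rightarrow> 'a) set \<Rightarrow> nat \<Rightarrow> bool" where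
  "free_code_of_rank A C K \<longleftrightarrow> C \<subseteq> {c. \<forall>\<alpha>. \<alpha> \<notin> A \<longrightarrow> c \<alpha> = 0} \<and>
     (\<exists>b :: nat \<Rightarrow> ('a \<Rightarrow> 'a).
        C = {(\<lambda>\<alpha>. \<Sum>i<K. u i * b i \<alpha>) | u. True} \<and>
        (\<forall>u. (\<lambda>\<alpha>. \<Sum>i<K. u i * b i \<alpha>) = (\<lambda>_. 0) \<longrightarrow> (\<forall>i<K. u i = 0)))"

definition hamming_weight :: "'a set \<Rightarrow> ('a \<Rightarrow> 'b::zero) \<Rightarrow> nat" where
  "hamming_weight A c = card {\<alpha>\<in>A. c \<alpha> \<noteq> 0}"

definition min_distance :: "'a set \<Rightarrow> ('a \<Rightarrow> 'b::zero) set \<Rightarrow> nat" where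
  "min_distance A C = Min {hamming_weight A c | c. c \<in> C \<and> c \<noteq> (\<lambda>_. 0)}"

end

theory Submission
  imports Defs
begin

definition pwu :: "'a::comm_ring_1 set \<Rightarrow> bool" where
  "pwu S \<longleftrightarrow> (\<forall>a\<in>S. \<forall>b\<in>S. a \<noteq> b \<longrightarrow> (a - b) dvd 1)"

lemma unit_mult_eq0: "(u::'a::comm_ring_1) dvd 1 \<Longrightarrow> u * x = 0 \<Longrightarrow> x = 0"
proof -
  assume "u dvd 1" "u * x = 0"
  then obtain k where "1 = u * k" by (auto elim: dvdE)
  then have "x = k * (u * x)" by (metis mult.assoc mult.commute mult_1)
  with \<open>u * x = 0\<close> show "x = 0" by simp
qed

lemma pwu_subset: "pwu S \<Longrightarrow> T \<subseteq> S \<Longrightarrow> pwu T"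
  unfolding pwu_def by blast

lemma prod_roots:
  fixes S :: "'a::comm_ring_1 set"
  assumes "finite S"
  shows "pwu S \<Longrightarrow> (\<forall>x\<in>S. poly f x = 0) \<Longrightarrow> \<exists>q. f = (\<Prod>a\<in>S. [:-a,1:]) * q"
  using assms
proof (induction S arbitrary: f rule: finite_induct)
  case empty
  then show ?case by auto
next
  case (insert a S)
  have pS: "pwu S" using insert.prems(1) by (rule pwu_subset) auto
  from insert.IH[OF pS] insert.prems(2) obtain q where fq: "f = (\<Prod>a\<in>S. [:-a,1:]) * q" by auto
  have u: "poly (\<Prod>a\<in>S. [:-a,1:]) a dvd 1"
  proof -
    have "poly (\<Prod>a\<in>S. [:-a,1:]) a = (\<Prod>s\<in>S. a - s)" by (simp add: poly_prod)
    also have "\<dots> dvd (\<Prod>s\<in>S. 1)"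
      apply (rule prod_dvd_prod)
      using insert.prems(1) insert.hyps(2) unfolding pwu_def by auto
    finally show ?thesis by simp
  qed
  have "poly f a = 0" using insert.prems(2) by auto
  then have "poly (\<Prod>a\<in>S. [:-a,1:]) a * poly q a = 0" by (simp add: fq)
  then have "poly q a = 0" using unit_mult_eq0[OF u] by blast
  then obtain q' where "q = [:-a,1:] * q'" by (auto simp: poly_eq_0_iff_dvd elim: dvdE)
  moreover have "(\<Prod>a\<in>insert a S. [:-a,1:]) = [:-a,1:] * (\<Prod>a\<in>S. [:-a,1:])"
    using insert.hyps by (rule prod.insert)
  ultimately have "f = (\<Prod>a\<in>insert a S. [:-a,1:]) * q'"
    using fq by (metis mult.assoc mult.commute)
  then show ?case by blast
qed

lemma prod_monic:
  fixes S :: "'a::comm_ring_1 set"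
  assumes "finite S" and nz: "(0::'a) \<noteq> 1"
  shows "degree (\<Prod>a\<in>S. [:-a,1:]) = card S \<and> coeff (\<Prod>a\<in>S. [:-a,1:]) (card S) = 1"
  using assms(1)
proof (induction S rule: finite_induct)
  case empty
  then show ?case by simp
next
  case (insert a S)
  let ?P = "\<Prod>a\<in>S. [:-a,1:]"
  have d1: "degree [:-a,1::'a:] = 1" using nz by simp
  have e: "coeff ([:-a,1:] * ?P) (degree [:-a,1::'a:] + degree ?P) = lead_coeff [:-a,1::'a:] * lead_coeff ?P"
    by (rule coeff_mult_degree_sum)
  have l1: "lead_coeff [:-a,1::'a:] = 1" using nz by simp
  have "coeff ([:-a,1:] * ?P) (degree [:-a,1::'a:] + degree ?P) = 1"
    using e l1 insert.IH by simp
  then have c: "coeff ([:-a,1:] * ?P) (card S + 1) = 1" using insert.IH d1 by simp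
  have "degree ([:-a,1:] * ?P) \<le> card S + 1"
    using degree_mult_le[of "[:-a,1:]" ?P] insert.IH d1 by simp
  moreover have "card S + 1 \<le> degree ([:-a,1:] * ?P)"
    using c nz by (intro le_degree) simp
  ultimately show ?case using insert.hyps c by (simp add: prod.insert)
qed

lemma vanish_zero:
  fixes S :: "'a::comm_ring_1 set"
  assumes nz: "(0::'a) \<noteq> 1" and "finite S" "pwu S" "\<forall>x\<in>S. poly f x = 0" "degree f < card S"
  shows "f = 0"
proof (rule ccontr)
  assume fnz: "f \<noteq> 0"
  obtain q where fq: "f = (\<Prod>a\<in>S. [:-a,1:]) * q" using prod_roots assms by blast
  let ?P = "\<Prod>a\<in>S. [:-a,1:]"
  have q0: "q \<noteq> 0" using fnz fq by auto
  have pm: "degree ?P = card S" "coeff ?P (card S) = 1" using prod_monic[OF assms(2) nz] by auto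
  have "coeff f (degree ?P + degree q) = lead_coeff q"
    unfolding fq coeff_mult_degree_sum using pm by simp
  then have "coeff f (card S + degree q) \<noteq> 0" using q0 pm by simp
  then have "card S + degree q \<le> degree f" by (rule le_degree)
  with assms(5) show False by simp
qed


theorem mainTheorem11:
  fixes A :: "'a::comm_ring_1 set" and Ablk :: "nat \<Rightarrow> 'a set"
    and l r t K :: nat and g :: "'a poly" and \<Phi> :: "(nat \<Rightarrow> 'a) \<Rightarrow> 'a poly"
  assumes chain: "finite_chain_ring TYPE('a)"
    and r: "r \<ge> 1"
    and wc: "well_conditioned A"
    and partA: "A = (\<Union>i<l. Ablk i)"
    and disj: "\<forall>i<l. \<forall>j<l. i \<noteq> j \<longrightarrow> Ablk i \<inter> Ablk j = {}"
    and blk: "\<forall>i<l. card (Ablk i) = r + 1"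
    and gF: "g \<in> F_A A Ablk l" and gdeg: "degree g = r + 1"
    and gspan: "F_A A Ablk l = {(\<Sum>i<l. smult (c i) (g ^ i)) | c. True}"
    and t: "1 \<le> t" "t \<le> l" and K: "K = r * t"
    and \<Phi>_into: "\<Phi> ` vecs K \<subseteq> F_A_r A Ablk l r"
    and \<Phi>_inj: "inj_on \<Phi> (vecs K)"
    and \<Phi>_add: "\<forall>a\<in>vecs K. \<forall>b\<in>vecs K. \<Phi> (\<lambda>i. a i + b i) = \<Phi> a + \<Phi> b"
    and \<Phi>_smult: "\<forall>c. \<forall>a\<in>vecs K. \<Phi> (\<lambda>i. c * a i) = smult c (\<Phi> a)"
  shows "card A = (r + 1) * l
    \<and> free_code_of_rank A (eval_code A K \<Phi>) K
    \<and> (\<forall>j<l. \<forall>\<alpha>\<in>Ablk j. \<forall>c\<in>eval_code A K \<Phi>. \<forall>c'\<in>eval_code A K \<Phi>.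
          (\<forall>\<beta>\<in>Ablk j - {\<alpha>}. c \<beta> = c' \<beta>) \<longrightarrow> c \<alpha> = c' \<alpha>)
    \<and> int (min_distance A (eval_code A K \<Phi>))
        \<ge> int (card A) - int (Max {degree (\<Phi> a) | a. a \<in> vecs K \<and> a \<noteq> (\<lambda>_. 0)})"
proof -
  have loc: "local_ring TYPE('a)" and finU: "finite (UNIV::'a set)"
    using chain unfolding finite_chain_ring_def by auto
  have nz: "(0::'a) \<noteq> 1" using loc unfolding local_ring_def by auto
  have idl: "is_ideal {a::'a. \<not> a dvd 1}"
    using loc unfolding local_ring_def units_of_ring_def by (simp add: Compl_eq)
  have finA: "finite A" by (rule finite_subset[OF subset_UNIV finU])
  have uz1: "(u - z) dvd 1" if "u dvd 1" "\<not> z dvd 1" for u z :: 'a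
  proof (rule ccontr)
    assume "\<not> (u - z) dvd 1"
    then have m1: "u - z \<in> {a::'a. \<not> a dvd 1}" by simp
    have m2: "z \<in> {a::'a. \<not> a dvd 1}" using that by simp
    have "\<forall>x\<in>{a::'a. \<not> a dvd 1}. \<forall>y\<in>{a::'a. \<not> a dvd 1}. x + y \<in> {a::'a. \<not> a dvd 1}"
      using idl unfolding is_ideal_def by (elim conjE)
    then have "\<forall>y\<in>{a::'a. \<not> a dvd 1}. (u - z) + y \<in> {a::'a. \<not> a dvd 1}" using m1 by (rule bspec)
    then have "(u - z) + z \<in> {a::'a. \<not> a dvd 1}" using m2 by (rule bspec)
    then show False using that by simp
  qed
  have uz2: "(z - u) dvd 1" if "u dvd 1" "\<not> z dvd 1" for u z :: 'a
  proof -
    have "(u - z) dvd 1" using uz1 that by blast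
    moreover have "z - u = - (u - z)" by simp
    ultimately show ?thesis by (simp only: minus_dvd_iff)
  qed
  have pwA: "pwu A"
    using wc unfolding well_conditioned_def
  proof
    assume "subtractive A" then show "pwu A"
      unfolding subtractive_def pwu_def units_of_ring_def by auto
  next
    assume "\<exists>a\<in>A. subtractive (A - {a}) \<and> (zero_divisor a \<or> a = 0)"
    then obtain a0 where a0: "a0 \<in> A" "subtractive (A - {a0})" "zero_divisor a0 \<or> a0 = 0" by blast
    have nu: "\<not> a0 dvd 1"
    proof
      assume u: "a0 dvd 1"
      show False using a0(3)
      proof
        assume "zero_divisor a0"
        then obtain b where "b \<noteq> 0" "a0 * b = 0" unfolding zero_divisor_def by blast
        then show False using unit_mult_eq0[OF u] by blast
      next
        assume "a0 = 0" then show False using u nz by simp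
      qed
    qed
    have sub: "\<And>x. x \<in> A - {a0} \<Longrightarrow> x dvd 1" and
         sub2: "\<And>x y. x \<in> A - {a0} \<Longrightarrow> y \<in> A - {a0} \<Longrightarrow> x \<noteq> y \<Longrightarrow> (x - y) dvd 1"
      using a0(2) unfolding subtractive_def units_of_ring_def by auto
    show "pwu A" unfolding pwu_def
    proof (intro ballI impI)
      fix x y assume xy: "x \<in> A" "y \<in> A" "x \<noteq> y"
      show "(x - y) dvd 1"
      proof (cases "x = a0")
        case True
        then show ?thesis using uz2[OF sub nu] xy by auto
      next
        case False
        show ?thesis
        proof (cases "y = a0")
          case True
          then show ?thesis using uz1[OF sub nu] xy False by auto
        next
          case False2: False
          then show ?thesis using sub2 xy False by auto
        qed
      qed
    qed
  qed
  have l1: "l \<ge> 1" using t by simp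
  have Ablk_sub: "\<And>j. j < l \<Longrightarrow> Ablk j \<subseteq> A" using partA by auto
  have finB: "\<And>j. j < l \<Longrightarrow> finite (Ablk j)" using Ablk_sub finA finite_subset by blast
  have cardA: "card A = (r + 1) * l"
  proof -
    have "card A = (\<Sum>i\<in>{..<l}. card (Ablk i))"
      unfolding partA using finB disj by (intro card_UN_disjoint) auto
    also have "\<dots> = (r + 1) * l" using blk by simp
    finally show ?thesis .
  qed
  have zv: "(\<lambda>_. 0::'a) \<in> vecs K" unfolding vecs_def by simp
  have \<Phi>0: "\<Phi> (\<lambda>_. 0) = 0"
  proof -
    have "\<Phi> (\<lambda>i. 0 * (\<lambda>_. 0::'a) i) = smult 0 (\<Phi> (\<lambda>_. 0))" by (rule \<Phi>_smult[rule_format, OF zv])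
    then show ?thesis by simp
  qed
  have degF: "degree h \<le> (r + 1) * (l - 1)" if "h \<in> F_A A Ablk l" for h
  proof -
    have "h \<in> {(\<Sum>i<l. smult (c i) (g ^ i)) | c. True}" using that gspan by simp
    then obtain c where hc: "h = (\<Sum>i<l. smult (c i) (g ^ i))" by blast
    show ?thesis unfolding hc
    proof (rule degree_sum_le)
      fix i assume "i \<in> {..<l}"
      then have "i \<le> l - 1" by auto
      have "degree (smult (c i) (g ^ i)) \<le> degree (g ^ i)" by (rule degree_smult_le)
      also have "\<dots> \<le> degree g * i" by (rule degree_power_le)
      also have "\<dots> \<le> (r + 1) * (l - 1)" unfolding gdeg using \<open>i \<le> l - 1\<close> by (metis mult.commute mult_le_mono2)
      finally show "degree (smult (c i) (g ^ i)) \<le> (r + 1) * (l - 1)" .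
    qed simp
  qed
  have degPhi: "degree (\<Phi> a) < card A" if aK: "a \<in> vecs K" for a
  proof -
    obtain h where h: "\<Phi> a = (\<Sum>i<r. h i * monom 1 i)" "\<forall>i<r. h i \<in> F_A A Ablk l"
    proof -
      have "\<Phi> a \<in> F_A_r A Ablk l r" using \<Phi>_into aK(1) by (rule subsetD[OF _ imageI])
      then show ?thesis using that unfolding F_A_r_def by (smt (verit) mem_Collect_eq)
    qed
    have "degree (\<Phi> a) \<le> (r + 1) * (l - 1) + (r - 1)" unfolding h(1)
    proof (rule degree_sum_le)
      fix i assume i: "i \<in> {..<r}"
      have "degree (h i * monom 1 i) \<le> degree (h i) + degree (monom (1::'a) i)" by (rule degree_mult_le)
      also have "\<dots> \<le> (r + 1) * (l - 1) + (r - 1)"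
      proof (rule add_mono)
        show "degree (h i) \<le> (r + 1) * (l - 1)" using degF h(2) i by blast
        have "i \<le> r - 1" using i by auto
        then show "degree (monom (1::'a) i) \<le> r - 1" using degree_monom_le[of "1::'a" i] by linarith
      qed
      finally show "degree (h i * monom 1 i) \<le> (r + 1) * (l - 1) + (r - 1)" .
    qed simp
    also have "\<dots> < card A"
    proof -
      obtain l' where "l = Suc l'" using l1 by (cases l) auto
      then show ?thesis unfolding cardA using r by simp
    qed
    finally show ?thesis .
  qed
  define e :: "nat \<Rightarrow> nat \<Rightarrow> 'a" where "e = (\<lambda>i j. if j = i then 1 else 0)"
  have ev: "\<And>i. i < K \<Longrightarrow> e i \<in> vecs K" unfolding vecs_def e_def by auto
  have \<Phi>sum: "m \<le> K \<Longrightarrow> \<Phi> (\<lambda>j. if j < m then u j else 0) = (\<Sum>i<m. smult (u i) (\<Phi> (e i)))" for u m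
  proof (induction m)
    case 0
    then show ?case using \<Phi>0 by simp
  next
    case (Suc m)
    define v where "v = (\<lambda>j. if j < m then u j else (0::'a))"
    define w where "w = (\<lambda>j. u m * e m j)"
    have vv: "v \<in> vecs K" using Suc.prems unfolding v_def vecs_def by auto
    have wv: "w \<in> vecs K" using Suc.prems unfolding w_def vecs_def e_def by auto
    have eq: "(\<lambda>j. if j < Suc m then u j else 0) = (\<lambda>j. v j + w j)"
      unfolding v_def w_def e_def by (rule ext) (auto simp: less_Suc_eq)
    have "\<Phi> w = smult (u m) (\<Phi> (e m))" unfolding w_def using \<Phi>_smult ev Suc.prems by auto
    then show ?case unfolding eq using \<Phi>_add vv wv Suc v_def by simp
  qed
  define evp :: "'a poly \<Rightarrow> 'a \<Rightarrow> 'a" where "evp = (\<lambda>f \<alpha>. if \<alpha> \<in> A then poly f \<alpha> else 0)"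
  have Ceq: "eval_code A K \<Phi> = {evp (\<Phi> a) | a. a \<in> vecs K}" unfolding eval_code_def evp_def by simp
  have vanA: "\<Phi> a = 0" if "a \<in> vecs K" "evp (\<Phi> a) = (\<lambda>_. 0)" for a
  proof (rule vanish_zero[OF nz finA pwA])
    show "\<forall>x\<in>A. poly (\<Phi> a) x = 0" using that(2) unfolding evp_def by (metis (full_types))
    show "degree (\<Phi> a) < card A" using degPhi that(1) .
  qed
  have injz: "a = (\<lambda>_. 0)" if "a \<in> vecs K" "\<Phi> a = 0" for a
    using \<Phi>_inj that zv \<Phi>0 unfolding inj_on_def by metis
  have free: "free_code_of_rank A (eval_code A K \<Phi>) K"
  proof -
    define b where "b = (\<lambda>i. evp (\<Phi> (e i)))"
    show ?thesis unfolding free_code_of_rank_def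
    proof (intro conjI exI[of _ b])
    show "eval_code A K \<Phi> \<subseteq> {c. \<forall>\<alpha>. \<alpha> \<notin> A \<longrightarrow> c \<alpha> = 0}" unfolding Ceq evp_def by auto
    define ru where "ru = (\<lambda>u j. if j < K then u j else (0::'a))"
    have ruv: "ru u \<in> vecs K" for u unfolding ru_def vecs_def by auto
    have lin: "(\<lambda>\<alpha>. \<Sum>i<K. u i * b i \<alpha>) = evp (\<Phi> (ru u))" for u
    proof
      fix \<alpha>
      show "(\<Sum>i<K. u i * b i \<alpha>) = evp (\<Phi> (ru u)) \<alpha>"
        unfolding ru_def \<Phi>sum[OF order_refl] b_def evp_def by (simp add: poly_sum)
    qed
    show "eval_code A K \<Phi> = {(\<lambda>\<alpha>. \<Sum>i<K. u i * b i \<alpha>) | u. True}"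
    proof
      show "eval_code A K \<Phi> \<subseteq> {(\<lambda>\<alpha>. \<Sum>i<K. u i * b i \<alpha>) | u. True}"
      proof
        fix c assume "c \<in> eval_code A K \<Phi>"
        then obtain a where a: "a \<in> vecs K" "c = evp (\<Phi> a)" unfolding Ceq by auto
        have "ru a = a" using a(1) unfolding ru_def vecs_def by auto
        then have "c = (\<lambda>\<alpha>. \<Sum>i<K. a i * b i \<alpha>)" using lin[of a] a by simp
        then show "c \<in> {(\<lambda>\<alpha>. \<Sum>i<K. u i * b i \<alpha>) | u. True}" by blast
      qed
      show "{(\<lambda>\<alpha>. \<Sum>i<K. u i * b i \<alpha>) | u. True} \<subseteq> eval_code A K \<Phi>"
        using lin ruv unfolding Ceq by auto
    qed
    show "\<forall>u. (\<lambda>\<alpha>. \<Sum>i<K. u i * b i \<alpha>) = (\<lambda>_. 0) \<longrightarrow> (\<forall>i<K. u i = 0)"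
    proof (intro allI impI)
      fix u i assume h: "(\<lambda>\<alpha>. \<Sum>i<K. u i * b i \<alpha>) = (\<lambda>_. 0)" and i: "i < K"
      have "\<Phi> (ru u) = 0" using vanA[OF ruv] h lin by metis
      then have "ru u = (\<lambda>_. 0)" using injz ruv by blast
      then have "ru u i = 0" by simp
      then show "u i = 0" using i unfolding ru_def by simp
    qed
  qed
  qed
  have lp: "\<exists>p. degree p < r \<and> (\<forall>\<beta>\<in>Ablk j. poly (\<Phi> a) \<beta> = poly p \<beta>)"
    if aK: "a \<in> vecs K" "j < l" "\<alpha> \<in> Ablk j" for a j \<alpha>
  proof -
    obtain h where h: "\<Phi> a = (\<Sum>i<r. h i * monom 1 i)" "\<forall>i<r. h i \<in> F_A A Ablk l"
    proof -
      have "\<Phi> a \<in> F_A_r A Ablk l r" using \<Phi>_into aK(1) by (rule subsetD[OF _ imageI])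
      then show ?thesis using that unfolding F_A_r_def by (smt (verit) mem_Collect_eq)
    qed
    define p where "p = (\<Sum>i<r. monom (poly (h i) \<alpha>) i)"
    have "degree p \<le> r - 1" unfolding p_def
      by (rule degree_sum_le) (auto intro: order.trans[OF degree_monom_le])
    then have "degree p < r" using r by simp
    moreover have "poly (\<Phi> a) \<beta> = poly p \<beta>" if "\<beta> \<in> Ablk j" for \<beta>
    proof -
      have "\<forall>i<r. poly (h i) \<beta> = poly (h i) \<alpha>"
        using h(2) \<open>j < l\<close> \<open>\<alpha> \<in> Ablk j\<close> that unfolding F_A_def by blast
      then show ?thesis unfolding h(1) p_def by (simp add: poly_sum poly_monom)
    qed
    ultimately show ?thesis by blast
  qed
  have locality: "\<forall>j<l. \<forall>\<alpha>\<in>Ablk j. \<forall>c\<in>eval_code A K \<Phi>. \<forall>c'\<in>eval_code A K \<Phi>.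
          (\<forall>\<beta>\<in>Ablk j - {\<alpha>}. c \<beta> = c' \<beta>) \<longrightarrow> c \<alpha> = c' \<alpha>"
  proof (intro allI impI ballI)
    fix j \<alpha> c c' assume j: "j < l" and \<alpha>: "\<alpha> \<in> Ablk j" and c: "c \<in> eval_code A K \<Phi>"
      and c': "c' \<in> eval_code A K \<Phi>" and agree: "\<forall>\<beta>\<in>Ablk j - {\<alpha>}. c \<beta> = c' \<beta>"
    obtain a where a: "a \<in> vecs K" "c = evp (\<Phi> a)" using c unfolding Ceq by auto
    obtain a' where a': "a' \<in> vecs K" "c' = evp (\<Phi> a')" using c' unfolding Ceq by auto
    obtain p where p: "degree p < r" "\<forall>\<beta>\<in>Ablk j. poly (\<Phi> a) \<beta> = poly p \<beta>" using lp a(1) j \<alpha> by blast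
    obtain p' where p': "degree p' < r" "\<forall>\<beta>\<in>Ablk j. poly (\<Phi> a') \<beta> = poly p' \<beta>" using lp a'(1) j \<alpha> by blast
    have BA: "Ablk j \<subseteq> A" using Ablk_sub j .
    have "p - p' = 0"
    proof (rule vanish_zero[OF nz])
      show "finite (Ablk j - {\<alpha>})" using finB j by simp
      show "pwu (Ablk j - {\<alpha>})" using BA by (intro pwu_subset[OF pwA]) auto
      show "\<forall>x\<in>Ablk j - {\<alpha>}. poly (p - p') x = 0"
      proof
        fix x assume x: "x \<in> Ablk j - {\<alpha>}"
        then have "x \<in> A" "x \<in> Ablk j" using BA by auto
        then show "poly (p - p') x = 0" using agree[rule_format, OF x] p(2) p'(2)
          unfolding a(2) a'(2) evp_def by simp
      qed
      have "degree (p - p') \<le> max (degree p) (degree p')" by (rule degree_diff_le_max)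
      moreover have "card (Ablk j - {\<alpha>}) = r" using blk j \<alpha> finB by simp
      ultimately show "degree (p - p') < card (Ablk j - {\<alpha>})" using p(1) p'(1) by simp
    qed
    then show "c \<alpha> = c' \<alpha>" using p(2) p'(2) \<alpha> BA unfolding a(2) a'(2) evp_def by auto
  qed
  define W where "W = {hamming_weight A c | c. c \<in> eval_code A K \<Phi> \<and> c \<noteq> (\<lambda>_. 0)}"
  define D where "D = {degree (\<Phi> a) | a. a \<in> vecs K \<and> a \<noteq> (\<lambda>_. 0)}"
  have Wfin: "finite W"
  proof (rule finite_subset)
    show "W \<subseteq> {..card A}" unfolding W_def hamming_weight_def using finA
      by (auto intro!: card_mono)
  qed simp
  have Dfin: "finite D"
    by (rule finite_subset[of _ "{..<card A}"]) (auto simp: D_def degPhi)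
  have K1: "0 < K" using K r t by simp
  have e0: "e 0 \<in> vecs K" using ev K1 by simp
  have e0nz: "e 0 \<noteq> (\<lambda>_. 0)" using nz unfolding e_def by (metis)
  have Wne: "W \<noteq> {}"
  proof -
    have "evp (\<Phi> (e 0)) \<noteq> (\<lambda>_. 0)"
      using vanA[OF e0] injz[OF e0] e0nz by blast
    then show ?thesis unfolding W_def Ceq using e0 by blast
  qed
  obtain c where cW: "c \<in> eval_code A K \<Phi>" "c \<noteq> (\<lambda>_. 0)" "Min W = hamming_weight A c"
    using Min_in[OF Wfin Wne] unfolding W_def by auto
  obtain a where a: "a \<in> vecs K" "c = evp (\<Phi> a)" using cW(1) unfolding Ceq by auto
  have anz: "a \<noteq> (\<lambda>_. 0)" using cW(2) a \<Phi>0 unfolding evp_def by auto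
  have fnz: "\<Phi> a \<noteq> 0" using injz a(1) anz by blast
  have degM: "degree (\<Phi> a) \<le> Max D" using Dfin a(1) anz unfolding D_def by (auto intro!: Max_ge)
  define Z where "Z = {\<alpha>\<in>A. poly (\<Phi> a) \<alpha> = 0}"
  have ZA: "Z \<subseteq> A" unfolding Z_def by auto
  have cZ: "card Z \<le> degree (\<Phi> a)"
  proof (rule ccontr)
    assume "\<not> card Z \<le> degree (\<Phi> a)"
    then have "\<Phi> a = 0"
      using vanish_zero[OF nz finite_subset[OF ZA finA] pwu_subset[OF pwA ZA]] unfolding Z_def by auto
    with fnz show False by simp
  qed
  have "{\<alpha>\<in>A. c \<alpha> \<noteq> 0} = A - Z" unfolding a(2) evp_def Z_def by auto
  then have "hamming_weight A c = card A - card Z"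
    unfolding hamming_weight_def using card_Diff_subset[OF finite_subset[OF ZA finA] ZA] by simp
  moreover have "card Z \<le> card A" using card_mono[OF finA ZA] .
  ultimately have "int (min_distance A (eval_code A K \<Phi>)) \<ge> int (card A) - int (Max D)"
    using cW(3) cZ degM unfolding min_distance_def W_def[symmetric] by simp
  then show ?thesis using cardA free locality unfolding D_def by blast
qed

end
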